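(* Let $G_1$ and $G_2$ be non-empty graphs and $u\in V(G_1)$. Then $\mathrm{tww}(G_1(u\leftarrow G_2))=\max(\mathrm{tww}(G_1),\mathrm{tww}(G_2))$.
   Context: $G_1(u\leftarrow G_2)$ denotes the graph obtained from the disjoint union of $G_1-u$ and $G_2$ by making every vertex of $V(G_1)\setminus\{u\}$ that was adjacent to $u$ in $G_1$ adjacent to all vertices of $V(G_2)$. A trigraph $H$ consists of a vertex set $V(H)$ and two disjoint sets of unordered pairs of distinct vertices: black edges $E(H)$ and red edges $R(H)$. Two vertices are adjacent (neighbors) if they are joined by a black or a red edge. The red graph of $H$ is the graph $(V(H),R(H))$; $H$ is a $d$-trigraph if its red graph has maximum degree at most $d$. A graph is a trigraph with no red edges. Contracting two distinct vertices $u,v$ of a trigraph $H$ yields the trigraph obtained by deleting $u$ and $v$ and adding a new vertex $z$ such that, for every other vertex $x$: $zx$ is a black edge if both $ux$ and $vx$ are black edges; $zx$ is not an edge if $x$ is adjacent to neither $u$ nor $v$; and $zx$ is a red edge otherwise. All edges not incident to $u$ or $v$ are unchanged. A $d$-sequence of an $n$-vertex graph $G$ is a sequence of $d$-trigraphs $G=G_n,G_{n-1},\dots,G_1$ such that $G_1$ has a single vertex and each $G_{i-1}$ is obtained from $G_i$ by one contraction (so $G_i$ has $i$ vertices). The twin-width $\mathrm{tww}(G)$ of $G$ is the minimum $d$ such that $G$ admits a $d$-sequence. *)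

theory Defs
  imports Main
begin

type_synonym 'a trigraph = "'a set \<times> 'a set set \<times> 'a set set"

definition tverts :: "'a trigraph \<Rightarrow> 'a set" where
  "tverts H = fst H"
definition tblack :: "'a trigraph \<Rightarrow> 'a set set" where
  "tblack H = fst (snd H)"
definition tred :: "'a trigraph \<Rightarrow> 'a set set" where
  "tred H = snd (snd H)"

definition pairs_on :: "'a set \<Rightarrow> 'a set set" where
  "pairs_on V = {{x, y} | x y. x \<in> V \<and> y \<in> V \<and> x \<noteq> y}"

definition wf_trigraph :: "'a trigraph \<Rightarrow> bool" where
  "wf_trigraph H \<longleftrightarrow> finite (tverts H) \<and> tblack H \<subseteq> pairs_on (tverts H)
     \<and> tred H \<subseteq> pairs_on (tverts H) \<and> tblack H \<inter> tred H = {}"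

type_synonym 'a graph = "'a set \<times> 'a set set"

definition is_graph :: "'a graph \<Rightarrow> bool" where
  "is_graph G \<longleftrightarrow> finite (fst G) \<and> snd G \<subseteq> pairs_on (fst G)"

definition graph_trigraph :: "'a graph \<Rightarrow> 'a trigraph" where
  "graph_trigraph G = (fst G, snd G, {})"

definition tadj :: "'a trigraph \<Rightarrow> 'a \<Rightarrow> 'a \<Rightarrow> bool" where
  "tadj H x y \<longleftrightarrow> {x, y} \<in> tblack H \<union> tred H"

definition red_degree :: "'a trigraph \<Rightarrow> 'a \<Rightarrow> nat" where
  "red_degree H x = card {y \<in> tverts H. {x, y} \<in> tred H}"

definition is_d_trigraph :: "nat \<Rightarrow> 'a trigraph \<Rightarrow> bool" where
  "is_d_trigraph d H \<longleftrightarrow> wf_trigraph H \<and> (\<forall>x \<in> tverts H. red_degree H x \<le> d)"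

text \<open>Contraction of u and v into a new vertex z (z must not be one of the
  remaining vertices; reusing the name u or v is allowed since they are deleted).\<close>
definition contract :: "'a trigraph \<Rightarrow> 'a \<Rightarrow> 'a \<Rightarrow> 'a \<Rightarrow> 'a trigraph" where
  "contract H u v z =
    (let W = tverts H - {u, v} in
     (W \<union> {z},
      {e \<in> tblack H. u \<notin> e \<and> v \<notin> e}
        \<union> {{z, x} | x. x \<in> W \<and> {u, x} \<in> tblack H \<and> {v, x} \<in> tblack H},
      {e \<in> tred H. u \<notin> e \<and> v \<notin> e}
        \<union> {{z, x} | x. x \<in> W \<and> (tadj H u x \<or> tadj H v x)
                          \<and> \<not> ({u, x} \<in> tblack H \<and> {v, x} \<in> tblack H)}))"

definition contraction_step :: "'a trigraph \<Rightarrow> 'a trigraph \<Rightarrow> bool" where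
  "contraction_step H H' \<longleftrightarrow> (\<exists>u v z. u \<in> tverts H \<and> v \<in> tverts H \<and> u \<noteq> v
      \<and> z \<notin> tverts H - {u, v} \<and> H' = contract H u v z)"

text \<open>A d-sequence of the n-vertex graph G: list S = [G_n, ..., G_1].\<close>
definition d_sequence :: "nat \<Rightarrow> 'a graph \<Rightarrow> 'a trigraph list \<Rightarrow> bool" where
  "d_sequence d G S \<longleftrightarrow>
     length S = card (fst G) \<and> S \<noteq> [] \<and> S ! 0 = graph_trigraph G
     \<and> (\<forall>i < length S. is_d_trigraph d (S ! i) \<and> card (tverts (S ! i)) = card (fst G) - i)
     \<and> card (tverts (last S)) = 1
     \<and> (\<forall>i. Suc i < length S \<longrightarrow> contraction_step (S ! i) (S ! Suc i))"

definition twin_width :: "'a graph \<Rightarrow> nat" where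
  "twin_width G = (LEAST d. \<exists>S. d_sequence d G S)"

definition substitute :: "'a graph \<Rightarrow> 'a \<Rightarrow> 'b graph \<Rightarrow> ('a + 'b) graph" where
  "substitute G1 u G2 =
    (Inl ` (fst G1 - {u}) \<union> Inr ` fst G2,
     {Inl ` e | e. e \<in> snd G1 \<and> u \<notin> e}
       \<union> {Inr ` e | e. e \<in> snd G2}
       \<union> {{Inl x, Inr y} | x y. x \<in> fst G1 - {u} \<and> {u, x} \<in> snd G1 \<and> y \<in> fst G2})"

end

theory Submission
  imports Defs
begin

definition cmpl :: "'a graph \<Rightarrow> 'a set \<Rightarrow> 'a set \<Rightarrow> bool" where
  "cmpl G A B \<longleftrightarrow> (\<forall>a\<in>A. \<forall>b\<in>B. {a,b} \<in> snd G)"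
definition mixd :: "'a graph \<Rightarrow> 'a set \<Rightarrow> 'a set \<Rightarrow> bool" where
  "mixd G A B \<longleftrightarrow> (\<exists>a\<in>A. \<exists>b\<in>B. {a,b} \<in> snd G) \<and> \<not> cmpl G A B"

lemma cmpl_sym: "cmpl G A B = cmpl G B A"
  unfolding cmpl_def by (metis insert_commute)
lemma mixd_sym: "mixd G A B = mixd G B A"
proof -
  have "(\<exists>a\<in>A. \<exists>b\<in>B. {a,b} \<in> snd G) = (\<exists>a\<in>B. \<exists>b\<in>A. {a,b} \<in> snd G)"
    by (metis insert_commute)
  then show ?thesis unfolding mixd_def cmpl_sym[of G A B] by simp
qed

lemma mixd_transfer:
  assumes "\<forall>p\<in>A. bk p \<in> X" "\<forall>q\<in>B. bk q \<in> Y"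
    "\<forall>p\<in>A. \<forall>q\<in>B. ({p,q} \<in> snd H \<longleftrightarrow> {bk p, bk q} \<in> snd K)"
    "mixd H A B"
  shows "mixd K X Y"
  using assms unfolding mixd_def cmpl_def by metis

lemma mixd_single: "\<not> mixd G {a} {b}"
  unfolding mixd_def cmpl_def by auto

definition rep :: "'a graph \<Rightarrow> 'b trigraph \<Rightarrow> ('b \<Rightarrow> 'a set) \<Rightarrow> bool" where
  "rep G T P \<longleftrightarrow> wf_trigraph T \<and> (\<forall>x\<in>tverts T. P x \<noteq> {})
     \<and> (\<forall>x\<in>tverts T. \<forall>y\<in>tverts T. x \<noteq> y \<longrightarrow> P x \<inter> P y = {})
     \<and> (\<forall>x\<in>tverts T. \<forall>y\<in>tverts T. x \<noteq> y \<longrightarrow>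
          ({x,y} \<in> tblack T \<longleftrightarrow> cmpl G (P x) (P y)) \<and> ({x,y} \<in> tred T \<longleftrightarrow> mixd G (P x) (P y)))"

lemma tverts_contract: "tverts (contract H u v z) = (tverts H - {u,v}) \<union> {z}"
  by (simp add: contract_def tverts_def Let_def)

lemma pairs_onD: "e \<in> pairs_on V \<Longrightarrow> \<exists>x y. e = {x,y} \<and> x \<in> V \<and> y \<in> V \<and> x \<noteq> y"
  unfolding pairs_on_def by blast

lemma wf_black: "wf_trigraph T \<Longrightarrow> {x,y} \<in> tblack T \<Longrightarrow> x \<in> tverts T \<and> y \<in> tverts T \<and> x \<noteq> y"
proof -
  assume "wf_trigraph T" "{x,y} \<in> tblack T"
  then have "{x,y} \<in> pairs_on (tverts T)" unfolding wf_trigraph_def by blast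
  then obtain a b where "{x,y} = {a,b}" "a \<in> tverts T" "b \<in> tverts T" "a \<noteq> b" using pairs_onD by blast
  then show ?thesis by (auto simp: doubleton_eq_iff)
qed
lemma wf_red: "wf_trigraph T \<Longrightarrow> {x,y} \<in> tred T \<Longrightarrow> x \<in> tverts T \<and> y \<in> tverts T \<and> x \<noteq> y"
proof -
  assume "wf_trigraph T" "{x,y} \<in> tred T"
  then have "{x,y} \<in> pairs_on (tverts T)" unfolding wf_trigraph_def by blast
  then obtain a b where "{x,y} = {a,b}" "a \<in> tverts T" "b \<in> tverts T" "a \<noteq> b" using pairs_onD by blast
  then show ?thesis by (auto simp: doubleton_eq_iff)
qed

lemma black_contract:
  "tblack (contract H u v z) = {e \<in> tblack H. u \<notin> e \<and> v \<notin> e}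
        \<union> {{z, x} | x. x \<in> tverts H - {u,v} \<and> {u, x} \<in> tblack H \<and> {v, x} \<in> tblack H}"
  by (simp add: contract_def tblack_def tverts_def Let_def)
lemma red_contract:
  "tred (contract H u v z) = {e \<in> tred H. u \<notin> e \<and> v \<notin> e}
        \<union> {{z, x} | x. x \<in> tverts H - {u,v} \<and> (tadj H u x \<or> tadj H v x)
                          \<and> \<not> ({u, x} \<in> tblack H \<and> {v, x} \<in> tblack H)}"
  by (simp add: contract_def tred_def tverts_def Let_def)

lemma wf_contract:
  assumes wf: "wf_trigraph H" and z: "z \<notin> tverts H - {u,v}"
  shows "wf_trigraph (contract H u v z)"
proof -
  have f: "finite (tverts H)" using wf unfolding wf_trigraph_def by simp
  have b: "tblack H \<subseteq> pairs_on (tverts H)" and r: "tred H \<subseteq> pairs_on (tverts H)"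
    and d: "tblack H \<inter> tred H = {}" using wf unfolding wf_trigraph_def by auto
  let ?W = "tverts H - {u,v}"
  have old: "\<And>e. e \<in> pairs_on (tverts H) \<Longrightarrow> u \<notin> e \<Longrightarrow> v \<notin> e \<Longrightarrow> e \<in> pairs_on (?W \<union> {z}) \<and> z \<notin> e"
    using z unfolding pairs_on_def by blast
  have new: "\<And>x. x \<in> ?W \<Longrightarrow> {z,x} \<in> pairs_on (?W \<union> {z})"
    using z unfolding pairs_on_def by blast
  show ?thesis
    unfolding wf_trigraph_def tverts_contract black_contract red_contract
  proof (intro conjI)
    show "finite (?W \<union> {z})" using f by simp
    show "{e \<in> tblack H. u \<notin> e \<and> v \<notin> e} \<union>
      {{z, x} |x. x \<in> ?W \<and> {u, x} \<in> tblack H \<and> {v, x} \<in> tblack H} \<subseteq> pairs_on (?W \<union> {z})"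
    proof
      fix e assume "e \<in> {e \<in> tblack H. u \<notin> e \<and> v \<notin> e} \<union>
      {{z, x} |x. x \<in> ?W \<and> {u, x} \<in> tblack H \<and> {v, x} \<in> tblack H}"
      then show "e \<in> pairs_on (?W \<union> {z})"
      proof
        assume "e \<in> {e \<in> tblack H. u \<notin> e \<and> v \<notin> e}" then show ?thesis using old b by blast
      next
        assume "e \<in> {{z, x} |x. x \<in> ?W \<and> {u, x} \<in> tblack H \<and> {v, x} \<in> tblack H}"
        then show ?thesis using new by blast
      qed
    qed
    show "{e \<in> tred H. u \<notin> e \<and> v \<notin> e} \<union>
      {{z, x} |x. x \<in> ?W \<and> (tadj H u x \<or> tadj H v x) \<and> \<not> ({u, x} \<in> tblack H \<and> {v, x} \<in> tblack H)}
      \<subseteq> pairs_on (?W \<union> {z})"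
    proof
      fix e assume "e \<in> {e \<in> tred H. u \<notin> e \<and> v \<notin> e} \<union>
      {{z, x} |x. x \<in> ?W \<and> (tadj H u x \<or> tadj H v x) \<and> \<not> ({u, x} \<in> tblack H \<and> {v, x} \<in> tblack H)}"
      then show "e \<in> pairs_on (?W \<union> {z})"
      proof
        assume "e \<in> {e \<in> tred H. u \<notin> e \<and> v \<notin> e}" then show ?thesis using old r by blast
      next
        assume "e \<in> {{z, x} |x. x \<in> ?W \<and> (tadj H u x \<or> tadj H v x) \<and> \<not> ({u, x} \<in> tblack H \<and> {v, x} \<in> tblack H)}"
        then show ?thesis using new by blast
      qed
    qed
    show "({e \<in> tblack H. u \<notin> e \<and> v \<notin> e} \<union>
     {{z, x} |x. x \<in> ?W \<and> {u, x} \<in> tblack H \<and> {v, x} \<in> tblack H}) \<inter>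
    ({e \<in> tred H. u \<notin> e \<and> v \<notin> e} \<union>
     {{z, x} |x. x \<in> ?W \<and> (tadj H u x \<or> tadj H v x) \<and> \<not> ({u, x} \<in> tblack H \<and> {v, x} \<in> tblack H)}) = {}"
    proof -
      have "\<And>e. e \<in> tblack H \<Longrightarrow> u \<notin> e \<Longrightarrow> v \<notin> e \<Longrightarrow> z \<notin> e" using old b by blast
      moreover have "\<And>e. e \<in> tred H \<Longrightarrow> u \<notin> e \<Longrightarrow> v \<notin> e \<Longrightarrow> z \<notin> e" using old r by blast
      ultimately show ?thesis using d by (auto simp: doubleton_eq_iff)
    qed
  qed
qed

lemma black_contract_old:
  assumes "wf_trigraph H" "z \<notin> tverts H - {u,v}" "x \<in> tverts H - {u,v}" "y \<in> tverts H - {u,v}"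
  shows "{x,y} \<in> tblack (contract H u v z) \<longleftrightarrow> {x,y} \<in> tblack H"
proof -
  have "\<And>x'. {x,y} \<noteq> {z,x'}" using assms(2-4) by (auto simp: doubleton_eq_iff)
  then show ?thesis unfolding black_contract using assms(3,4) by auto
qed

lemma red_contract_old:
  assumes "wf_trigraph H" "z \<notin> tverts H - {u,v}" "x \<in> tverts H - {u,v}" "y \<in> tverts H - {u,v}"
  shows "{x,y} \<in> tred (contract H u v z) \<longleftrightarrow> {x,y} \<in> tred H"
proof -
  have "\<And>x'. {x,y} \<noteq> {z,x'}" using assms(2-4) by (auto simp: doubleton_eq_iff)
  then show ?thesis unfolding red_contract using assms(3,4) by auto
qed

lemma black_contract_new:
  assumes "wf_trigraph H" "z \<notin> tverts H - {u,v}" "y \<in> tverts H - {u,v}"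
  shows "{z,y} \<in> tblack (contract H u v z) \<longleftrightarrow> {u,y} \<in> tblack H \<and> {v,y} \<in> tblack H"
proof -
  have 1: "{z,y} \<in> tblack H \<Longrightarrow> u \<notin> {z,y} \<Longrightarrow> v \<notin> {z,y} \<Longrightarrow> False"
    using wf_black[OF assms(1)] assms(2) by blast
  have 2: "\<And>x'. {z,y} = {z,x'} \<longleftrightarrow> x' = y" using assms(2,3) by (auto simp: doubleton_eq_iff)
  show ?thesis
  proof
    assume "{z,y} \<in> tblack (contract H u v z)"
    then consider "{z,y} \<in> tblack H" "u \<notin> {z,y}" "v \<notin> {z,y}"
      | x' where "{z,y} = {z,x'}" "x' \<in> tverts H - {u,v}" "{u, x'} \<in> tblack H" "{v, x'} \<in> tblack H"
      unfolding black_contract by blast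
    then show "{u,y} \<in> tblack H \<and> {v,y} \<in> tblack H"
    proof cases
      case 1 then show ?thesis using \<open>{z,y} \<in> tblack H \<Longrightarrow> u \<notin> {z,y} \<Longrightarrow> v \<notin> {z,y} \<Longrightarrow> False\<close> by blast
    next
      case 2 then show ?thesis using \<open>\<And>x'. {z,y} = {z,x'} \<longleftrightarrow> x' = y\<close> by metis
    qed
  next
    assume "{u,y} \<in> tblack H \<and> {v,y} \<in> tblack H"
    then show "{z,y} \<in> tblack (contract H u v z)" unfolding black_contract using assms(3) by blast
  qed
qed

lemma red_contract_new:
  assumes "wf_trigraph H" "z \<notin> tverts H - {u,v}" "y \<in> tverts H - {u,v}"
  shows "{z,y} \<in> tred (contract H u v z) \<longleftrightarrow> (tadj H u y \<or> tadj H v y) \<and> \<not> ({u,y} \<in> tblack H \<and> {v,y} \<in> tblack H)"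
proof -
  have 1: "{z,y} \<in> tred H \<Longrightarrow> u \<notin> {z,y} \<Longrightarrow> v \<notin> {z,y} \<Longrightarrow> False"
    using wf_red[OF assms(1)] assms(2) by blast
  have 2: "\<And>x'. {z,y} = {z,x'} \<longleftrightarrow> x' = y" using assms(2,3) by (auto simp: doubleton_eq_iff)
  show ?thesis
  proof
    assume "{z,y} \<in> tred (contract H u v z)"
    then consider "{z,y} \<in> tred H" "u \<notin> {z,y}" "v \<notin> {z,y}"
      | x' where "{z,y} = {z,x'}" "x' \<in> tverts H - {u,v}" "(tadj H u x' \<or> tadj H v x') \<and> \<not> ({u, x'} \<in> tblack H \<and> {v, x'} \<in> tblack H)"
      unfolding red_contract by blast
    then show "(tadj H u y \<or> tadj H v y) \<and> \<not> ({u,y} \<in> tblack H \<and> {v,y} \<in> tblack H)"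
    proof cases
      case 1 then show ?thesis using \<open>{z,y} \<in> tred H \<Longrightarrow> u \<notin> {z,y} \<Longrightarrow> v \<notin> {z,y} \<Longrightarrow> False\<close> by blast
    next
      case 2 then show ?thesis using \<open>\<And>x'. {z,y} = {z,x'} \<longleftrightarrow> x' = y\<close> by metis
    qed
  next
    assume "(tadj H u y \<or> tadj H v y) \<and> \<not> ({u,y} \<in> tblack H \<and> {v,y} \<in> tblack H)"
    then show "{z,y} \<in> tred (contract H u v z)" unfolding red_contract using assms(3) by blast
  qed
qed

lemma cmpl_Un: "cmpl G (A \<union> B) C \<longleftrightarrow> cmpl G A C \<and> cmpl G B C"
  unfolding cmpl_def by blast

lemma mixd_Un:
  assumes "A \<noteq> {}" "B \<noteq> {}" "C \<noteq> {}"
  shows "mixd G (A \<union> B) C \<longleftrightarrow> ((cmpl G A C \<or> mixd G A C) \<or> (cmpl G B C \<or> mixd G B C)) \<and> \<not> (cmpl G A C \<and> cmpl G B C)"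
  using assms unfolding mixd_def cmpl_def by blast

lemma rep_contract:
  assumes rep: "rep G H P" and uv: "u \<in> tverts H" "v \<in> tverts H" "u \<noteq> v"
    and z: "z \<notin> tverts H - {u,v}"
  shows "rep G (contract H u v z) (P(z := P u \<union> P v))"
proof -
  let ?W = "tverts H - {u,v}"
  let ?P = "P(z := P u \<union> P v)"
  have wf: "wf_trigraph H" using rep unfolding rep_def by blast
  have ne: "\<And>x. x \<in> tverts H \<Longrightarrow> P x \<noteq> {}" using rep unfolding rep_def by blast
  have dj: "\<And>x y. x \<in> tverts H \<Longrightarrow> y \<in> tverts H \<Longrightarrow> x \<noteq> y \<Longrightarrow> P x \<inter> P y = {}"
    using rep unfolding rep_def by blast
  have ed: "\<And>x y. x \<in> tverts H \<Longrightarrow> y \<in> tverts H \<Longrightarrow> x \<noteq> y \<Longrightarrow>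
          ({x,y} \<in> tblack H \<longleftrightarrow> cmpl G (P x) (P y)) \<and> ({x,y} \<in> tred H \<longleftrightarrow> mixd G (P x) (P y))"
    using rep unfolding rep_def by blast
  have zW: "z \<notin> ?W" using z by blast
  have Pw: "\<And>x. x \<in> ?W \<Longrightarrow> ?P x = P x" using zW by auto
  have newz: "\<And>y. y \<in> ?W \<Longrightarrow>
          ({z,y} \<in> tblack (contract H u v z) \<longleftrightarrow> cmpl G (?P z) (?P y)) \<and>
          ({z,y} \<in> tred (contract H u v z) \<longleftrightarrow> mixd G (?P z) (?P y))"
  proof -
    fix y assume y: "y \<in> ?W"
    then have yH: "y \<in> tverts H" "y \<noteq> u" "y \<noteq> v" by auto
    have tu: "tadj H u y \<longleftrightarrow> cmpl G (P u) (P y) \<or> mixd G (P u) (P y)"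
      unfolding tadj_def using ed[OF uv(1) yH(1)] yH by auto
    have tv: "tadj H v y \<longleftrightarrow> cmpl G (P v) (P y) \<or> mixd G (P v) (P y)"
      unfolding tadj_def using ed[OF uv(2) yH(1)] yH by auto
    show "({z,y} \<in> tblack (contract H u v z) \<longleftrightarrow> cmpl G (?P z) (?P y)) \<and>
          ({z,y} \<in> tred (contract H u v z) \<longleftrightarrow> mixd G (?P z) (?P y))"
      unfolding black_contract_new[OF wf z y] red_contract_new[OF wf z y] Pw[OF y]
      using ed[OF uv(1) yH(1)] ed[OF uv(2) yH(1)] yH tu tv cmpl_Un[of G "P u" "P v" "P y"]
        mixd_Un[OF ne[OF uv(1)] ne[OF uv(2)] ne[OF yH(1)], of G]
      by auto
  qed
  show ?thesis unfolding rep_def tverts_contract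
  proof (intro conjI ballI impI)
    show "wf_trigraph (contract H u v z)" using wf_contract[OF wf z] .
  next
    fix x assume "x \<in> ?W \<union> {z}" then show "?P x \<noteq> {}" using ne uv by auto
  next
    fix x y assume x: "x \<in> ?W \<union> {z}" and y: "y \<in> ?W \<union> {z}" and xy: "x \<noteq> y"
    show "?P x \<inter> ?P y = {}"
    proof (cases "x = z")
      case True then have yW: "y \<in> ?W" using y xy by auto
      have "P y \<inter> P u = {}" "P y \<inter> P v = {}" using yW dj uv by auto
      moreover have "?P x = P u \<union> P v" "?P y = P y" using True Pw[OF yW] by auto
      ultimately show ?thesis by auto
    next
      case False
      then have xW: "x \<in> ?W" using x by auto
      show ?thesis
      proof (cases "y = z")
        case True
        have "P x \<inter> P u = {}" "P x \<inter> P v = {}" using xW dj uv by auto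
        moreover have "?P y = P u \<union> P v" "?P x = P x" using True Pw[OF xW] by auto
        ultimately show ?thesis by auto
      next
        case False then have yW: "y \<in> ?W" using y by auto
        have "?P y = P y" "?P x = P x" using Pw[OF xW] Pw[OF yW] by auto
        then show ?thesis using xW yW dj xy by auto
      qed
    qed
  next
    fix x y assume x: "x \<in> ?W \<union> {z}" and y: "y \<in> ?W \<union> {z}" and xy: "x \<noteq> y"
    have both: "({x, y} \<in> tblack (contract H u v z)) = cmpl G (?P x) (?P y) \<and>
          ({x, y} \<in> tred (contract H u v z)) = mixd G (?P x) (?P y)"
    proof (cases "x = z")
      case True then have "y \<in> ?W" using y xy by auto
      then show ?thesis using True newz by blast
    next
      case False
      then have xW: "x \<in> ?W" using x by auto
      show ?thesis
      proof (cases "y = z")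
        case True
        have "{x,y} = {z,x}" using True by (simp add: insert_commute)
        then show ?thesis using newz[OF xW] cmpl_sym[of G "?P x" "?P y"] mixd_sym[of G "?P x" "?P y"] True
          by simp
      next
        case False then have yW: "y \<in> ?W" using y by auto
        have e: "?P y = P y" "?P x = P x" using Pw[OF xW] Pw[OF yW] by auto
        have "x \<in> tverts H" "y \<in> tverts H" using xW yW by auto
        then show ?thesis unfolding e black_contract_old[OF wf z xW yW] red_contract_old[OF wf z xW yW]
          using xy ed by blast
      qed
    qed
    then show "({x, y} \<in> tblack (contract H u v z)) = cmpl G (?P x) (?P y)" by blast
    show "({x, y} \<in> tred (contract H u v z)) = mixd G (?P x) (?P y)" using both by blast
  qed
qed

definition red_ok :: "nat \<Rightarrow> 'a graph \<Rightarrow> 'a set set \<Rightarrow> bool" where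
  "red_ok d G PP \<longleftrightarrow> (\<forall>A\<in>PP. card {B\<in>PP. B \<noteq> A \<and> mixd G A B} \<le> d)"

inductive chainP :: "nat \<Rightarrow> 'a graph \<Rightarrow> 'a set set \<Rightarrow> bool" for d G where
  cbase: "card PP = 1 \<Longrightarrow> red_ok d G PP \<Longrightarrow> chainP d G PP"
| cstep: "red_ok d G PP \<Longrightarrow> A \<in> PP \<Longrightarrow> B \<in> PP \<Longrightarrow> A \<noteq> B
           \<Longrightarrow> chainP d G (PP - {A,B} \<union> {A \<union> B}) \<Longrightarrow> chainP d G PP"

inductive chain :: "nat \<Rightarrow> 'a trigraph \<Rightarrow> bool" for d where
  tbase: "is_d_trigraph d H \<Longrightarrow> card (tverts H) = 1 \<Longrightarrow> chain d H"
| tstep: "is_d_trigraph d H \<Longrightarrow> contraction_step H H' \<Longrightarrow> chain d H' \<Longrightarrow> chain d H"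

lemma rep_wf: "rep G H P \<Longrightarrow> wf_trigraph H"
  unfolding rep_def by blast
lemma rep_ne: "rep G H P \<Longrightarrow> x \<in> tverts H \<Longrightarrow> P x \<noteq> {}"
  unfolding rep_def by blast
lemma rep_dj: "rep G H P \<Longrightarrow> x \<in> tverts H \<Longrightarrow> y \<in> tverts H \<Longrightarrow> x \<noteq> y \<Longrightarrow> P x \<inter> P y = {}"
  unfolding rep_def by blast
lemma rep_red: "rep G H P \<Longrightarrow> x \<in> tverts H \<Longrightarrow> y \<in> tverts H \<Longrightarrow> x \<noteq> y \<Longrightarrow> {x,y} \<in> tred H \<longleftrightarrow> mixd G (P x) (P y)"
  unfolding rep_def by blast
lemma rep_inj: "rep G H P \<Longrightarrow> inj_on P (tverts H)"
proof (rule inj_onI, rule ccontr)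
  fix x y assume "rep G H P" "x \<in> tverts H" "y \<in> tverts H" "P x = P y" "x \<noteq> y"
  then show False using rep_ne[of G H P x] rep_dj[of G H P x y] by auto
qed

lemma rep_finite: "rep G H P \<Longrightarrow> finite (tverts H)"
  using rep_wf unfolding wf_trigraph_def by blast

lemma rep_img_contract:
  assumes rep: "rep G H P" and uv: "u \<in> tverts H" "v \<in> tverts H" "u \<noteq> v"
    and z: "z \<notin> tverts H - {u,v}"
  shows "(P(z := P u \<union> P v)) ` tverts (contract H u v z) = P ` tverts H - {P u, P v} \<union> {P u \<union> P v}"
proof -
  have inj: "inj_on P (tverts H)" using rep_inj[OF rep] .
  have zW: "z \<notin> tverts H - {u,v}" using z .
  have 1: "(P(z := P u \<union> P v)) ` (tverts H - {u,v}) = P ` (tverts H - {u,v})"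
    using zW by (intro image_cong) auto
  have 2: "P ` (tverts H - {u,v}) = P ` tverts H - {P u, P v}"
    using inj uv by (auto simp: inj_on_eq_iff)
  show ?thesis unfolding tverts_contract image_Un 1 2 by simp
qed

lemma red_ok_of_rep:
  assumes rep: "rep G H P" and d: "\<forall>x\<in>tverts H. red_degree H x \<le> d"
  shows "red_ok d G (P ` tverts H)"
  unfolding red_ok_def
proof
  fix A assume "A \<in> P ` tverts H"
  then obtain x where x: "x \<in> tverts H" "A = P x" by blast
  have fin: "finite (tverts H)" using rep_finite[OF rep] .
  have "{B \<in> P ` tverts H. B \<noteq> A \<and> mixd G A B} \<subseteq> P ` {y \<in> tverts H. {x,y} \<in> tred H}"
  proof
    fix B assume "B \<in> {B \<in> P ` tverts H. B \<noteq> A \<and> mixd G A B}"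
    then obtain y where y: "y \<in> tverts H" "B = P y" "P y \<noteq> P x" "mixd G (P x) (P y)" using x by blast
    then have "x \<noteq> y" by blast
    then have "{x,y} \<in> tred H" using rep_red[OF rep x(1) y(1)] y by blast
    then show "B \<in> P ` {y \<in> tverts H. {x,y} \<in> tred H}" using y by blast
  qed
  then have "card {B \<in> P ` tverts H. B \<noteq> A \<and> mixd G A B} \<le> card (P ` {y \<in> tverts H. {x,y} \<in> tred H})"
    using fin by (intro card_mono) auto
  also have "\<dots> \<le> card {y \<in> tverts H. {x,y} \<in> tred H}" by (rule card_image_le) (use fin in auto)
  also have "\<dots> \<le> d" using d x unfolding red_degree_def by auto
  finally show "card {B \<in> P ` tverts H. B \<noteq> A \<and> mixd G A B} \<le> d" .
qed

lemma red_deg_of_rep: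
  assumes rep: "rep G H P" and ok: "red_ok d G (P ` tverts H)" and x: "x \<in> tverts H"
  shows "red_degree H x \<le> d"
proof -
  have fin: "finite (tverts H)" using rep_finite[OF rep] .
  have inj: "inj_on P (tverts H)" using rep_inj[OF rep] .
  have "P ` {y \<in> tverts H. {x,y} \<in> tred H} \<subseteq> {B \<in> P ` tverts H. B \<noteq> P x \<and> mixd G (P x) B}"
  proof
    fix B assume "B \<in> P ` {y \<in> tverts H. {x,y} \<in> tred H}"
    then obtain y where y: "y \<in> tverts H" "{x,y} \<in> tred H" "B = P y" by blast
    have "x \<noteq> y" using wf_red[OF rep_wf[OF rep]] y by blast
    then have "mixd G (P x) (P y)" "P x \<noteq> P y" using rep_red[OF rep x y(1)] y inj x unfolding inj_on_def by blast+
    then show "B \<in> {B \<in> P ` tverts H. B \<noteq> P x \<and> mixd G (P x) B}" using y by auto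
  qed
  then have "card (P ` {y \<in> tverts H. {x,y} \<in> tred H}) \<le> card {B \<in> P ` tverts H. B \<noteq> P x \<and> mixd G (P x) B}"
    using fin by (intro card_mono) auto
  also have "\<dots> \<le> d" using ok x unfolding red_ok_def by blast
  finally have "card (P ` {y \<in> tverts H. {x,y} \<in> tred H}) \<le> d" .
  moreover have "card (P ` {y \<in> tverts H. {x,y} \<in> tred H}) = card {y \<in> tverts H. {x,y} \<in> tred H}"
    by (rule card_image) (rule inj_on_subset[OF inj], auto)
  ultimately show ?thesis unfolding red_degree_def by simp
qed

lemma chain_to_chainP:
  assumes "chain d H" "rep G H P"
  shows "chainP d G (P ` tverts H)"
  using assms
proof (induction arbitrary: P rule: chain.induct)
  case (tbase H)
  then obtain x where "tverts H = {x}" by (meson card_1_singletonE)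
  then have "card (P ` tverts H) = 1" by simp
  moreover have "red_ok d G (P ` tverts H)"
    using red_ok_of_rep[OF tbase.prems] tbase.hyps unfolding is_d_trigraph_def by blast
  ultimately show ?case by (rule cbase)
next
  case (tstep H H')
  then obtain u v z where s: "u \<in> tverts H" "v \<in> tverts H" "u \<noteq> v" "z \<notin> tverts H - {u,v}"
     "H' = contract H u v z" unfolding contraction_step_def by blast
  have r': "rep G H' (P(z := P u \<union> P v))" using rep_contract[OF tstep.prems s(1-4)] s(5) by simp
  have "chainP d G ((P(z := P u \<union> P v)) ` tverts H')" using tstep.IH[OF r'] .
  then have c: "chainP d G (P ` tverts H - {P u, P v} \<union> {P u \<union> P v})"
    using rep_img_contract[OF tstep.prems s(1-4)] s(5) by simp
  have ne: "P u \<noteq> P v" using rep_inj[OF tstep.prems] s by (auto simp: inj_on_def)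
  show ?case
    by (rule cstep[OF _ _ _ ne c]) (use red_ok_of_rep[OF tstep.prems] tstep.hyps s in \<open>auto simp: is_d_trigraph_def\<close>)
qed

lemma chainP_to_chain:
  assumes "chainP d G PP" "rep G H P" "PP = P ` tverts H"
  shows "chain d H"
  using assms
proof (induction arbitrary: H P rule: chainP.induct)
  case (cbase PP)
  have "card (tverts H) = 1" using cbase card_image[OF rep_inj[OF cbase.prems(1)]] by simp
  moreover have "is_d_trigraph d H"
    using red_deg_of_rep[OF cbase.prems(1)] cbase rep_wf[OF cbase.prems(1)] unfolding is_d_trigraph_def by blast
  ultimately show ?case by (rule tbase[rotated])
next
  case (cstep PP A B)
  obtain u v where uv: "u \<in> tverts H" "v \<in> tverts H" "A = P u" "B = P v" using cstep by blast
  then have "u \<noteq> v" using cstep by blast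
  have z: "u \<notin> tverts H - {u,v}" by blast
  have r': "rep G (contract H u v u) (P(u := P u \<union> P v))" using rep_contract[OF cstep.prems(1) uv(1,2) \<open>u \<noteq> v\<close> z] .
  have "chain d (contract H u v u)"
    using cstep.IH[OF r'] rep_img_contract[OF cstep.prems(1) uv(1,2) \<open>u \<noteq> v\<close> z] cstep.prems(2) uv by simp
  moreover have "contraction_step H (contract H u v u)"
    unfolding contraction_step_def using uv \<open>u \<noteq> v\<close> z by blast
  moreover have "is_d_trigraph d H"
    using red_deg_of_rep[OF cstep.prems(1)] cstep rep_wf[OF cstep.prems(1)] unfolding is_d_trigraph_def by blast
  ultimately show ?case using tstep by blast
qed

lemma seq_to_chain:
  assumes "d_sequence d G S"
  shows "chain d (graph_trigraph G)"
proof -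
  have len0: "S \<noteq> []" and h0: "S ! 0 = graph_trigraph G"
    and isd: "\<forall>i < length S. is_d_trigraph d (S ! i)"
    and lst: "card (tverts (last S)) = 1"
    and st: "\<forall>i. Suc i < length S \<longrightarrow> contraction_step (S ! i) (S ! Suc i)"
    using assms unfolding d_sequence_def by auto
  have len: "length S \<noteq> 0" using len0 by simp
  have "\<forall>k. k < length S \<longrightarrow> chain d (S ! (length S - 1 - k))"
  proof
    fix k show "k < length S \<longrightarrow> chain d (S ! (length S - 1 - k))"
    proof (induction k)
      case 0
      have "S ! (length S - 1) = last S" using len by (simp add: last_conv_nth)
      moreover have "length S - 1 < length S" using len by simp
      ultimately show ?case using isd lst by (auto intro!: tbase)
    next
      case (Suc k)
      show ?case
      proof
        assume k: "Suc k < length S"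
        let ?i = "length S - 1 - Suc k"
        have e: "Suc ?i = length S - 1 - k" using k by simp
        have "chain d (S ! Suc ?i)" using Suc k e by simp
        moreover have "Suc ?i < length S" using k by simp
        then have "contraction_step (S ! ?i) (S ! Suc ?i)" using st by blast
        moreover have "is_d_trigraph d (S ! ?i)" using isd k by simp
        ultimately show "chain d (S ! ?i)" by (blast intro: tstep)
      qed
    qed
  qed
  moreover have "length S - 1 < length S" using len by simp
  ultimately have "chain d (S ! (length S - 1 - (length S - 1)))" by blast
  then show ?thesis using h0 by simp
qed

lemma card_contract:
  assumes "wf_trigraph H" "contraction_step H H'"
  shows "card (tverts H') = card (tverts H) - 1"
proof -
  obtain u v z where s: "u \<in> tverts H" "v \<in> tverts H" "u \<noteq> v" "z \<notin> tverts H - {u,v}"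
     "H' = contract H u v z" using assms(2) unfolding contraction_step_def by blast
  have fin: "finite (tverts H)" using assms(1) unfolding wf_trigraph_def by blast
  have "card (tverts H - {u,v}) = card (tverts H) - 2" using s fin by (simp add: card_Diff_subset)
  moreover have "card (tverts H) \<ge> 2" using s fin
    by (metis card_2_iff card_mono empty_subsetI insert_subset)
  moreover have "card ((tverts H - {u,v}) \<union> {z}) = Suc (card (tverts H - {u,v}))"
    using s(4) fin by simp
  ultimately show ?thesis using s(5) tverts_contract[of H u v z] by simp
qed

lemma chain_to_seq:
  assumes "chain d H"
  shows "\<exists>S. S \<noteq> [] \<and> S ! 0 = H \<and> length S = card (tverts H)
     \<and> (\<forall>i < length S. is_d_trigraph d (S ! i) \<and> card (tverts (S ! i)) = card (tverts H) - i)
     \<and> card (tverts (last S)) = 1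
     \<and> (\<forall>i. Suc i < length S \<longrightarrow> contraction_step (S ! i) (S ! Suc i))"
  using assms
proof (induction rule: chain.induct)
  case (tbase H)
  then show ?case by (intro exI[of _ "[H]"]) auto
next
  case (tstep H H')
  then obtain S where S: "S \<noteq> []" "S ! 0 = H'" "length S = card (tverts H')"
     "\<forall>i < length S. is_d_trigraph d (S ! i) \<and> card (tverts (S ! i)) = card (tverts H') - i"
     "card (tverts (last S)) = 1"
     "\<forall>i. Suc i < length S \<longrightarrow> contraction_step (S ! i) (S ! Suc i)" by blast
  have c: "card (tverts H') = card (tverts H) - 1"
    using card_contract tstep.hyps unfolding is_d_trigraph_def by blast
  have pos: "card (tverts H') \<ge> 1" using S(1,3) by (cases S) auto
  show ?case
  proof (intro exI[of _ "H # S"] conjI allI impI)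
    show "length (H # S) = card (tverts H)" using S(3) c pos by simp
    fix i assume i: "i < length (H # S)"
    show "is_d_trigraph d ((H # S) ! i)"
      using i S(4) tstep.hyps by (cases i) auto
    show "card (tverts ((H # S) ! i)) = card (tverts H) - i"
      using i S(4) c pos by (cases i) auto
  next
    fix i assume "Suc i < length (H # S)"
    then show "contraction_step ((H # S) ! i) ((H # S) ! Suc i)"
      using S(2,6) tstep.hyps by (cases i) auto
  qed (use S in auto)
qed

lemma red_ok_mono: "red_ok d G PP \<Longrightarrow> d \<le> d' \<Longrightarrow> red_ok d' G PP"
  unfolding red_ok_def
proof
  fix A assume "\<forall>A\<in>PP. card {B \<in> PP. B \<noteq> A \<and> mixd G A B} \<le> d" "d \<le> d'" "A \<in> PP"
  then show "card {B \<in> PP. B \<noteq> A \<and> mixd G A B} \<le> d'" by fastforce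
qed

lemma chainP_mono:
  assumes "chainP d G PP" "d \<le> d'"
  shows "chainP d' G PP"
  using assms
proof (induction rule: chainP.induct)
  case (cbase PP)
  show ?case by (rule chainP.cbase[OF cbase(1) red_ok_mono[OF cbase(2) cbase(3)]])
next
  case (cstep PP A B)
  show ?case by (rule chainP.cstep[OF red_ok_mono[OF cstep(1) cstep(7)] cstep(2,3,4) cstep(6)[OF cstep(7)]])
qed

lemma red_ok_card: "finite PP \<Longrightarrow> red_ok (card PP) G PP"
  unfolding red_ok_def
proof
  fix A assume "finite PP"
  then show "card {B \<in> PP. B \<noteq> A \<and> mixd G A B} \<le> card PP" by (rule card_mono) auto
qed

lemma chainP_exists: "finite PP \<Longrightarrow> PP \<noteq> {} \<Longrightarrow> chainP (card PP) G PP"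
proof (induction "card PP" arbitrary: PP rule: less_induct)
  case less
  show ?case
  proof (cases "card PP = 1")
    case True
    have r: "red_ok (card PP) G PP" using less.prems(1) by (rule red_ok_card)
    show ?thesis apply (rule chainP.cbase) apply (rule True) apply (rule r) done
  next
    case False
    have "card PP \<noteq> 0" using less.prems by simp
    then have "card PP \<ge> 2" using False by linarith
    obtain A where A: "A \<in> PP" using less.prems by blast
    have "card (PP - {A}) \<ge> 1" using \<open>card PP \<ge> 2\<close> A less.prems(1) by simp
    then obtain B where B: "B \<in> PP - {A}" by (metis card.empty ex_in_conv not_one_le_zero)
    have AB: "A \<in> PP" "B \<in> PP" "A \<noteq> B" using A B by auto
    let ?Q = "PP - {A,B} \<union> {A \<union> B}"
    have fQ: "finite ?Q" using less.prems by simp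
    have "card (PP - {A,B}) = card PP - 2" using AB less.prems by (simp add: card_Diff_subset)
    moreover have "card ?Q \<le> card (PP - {A,B}) + 1"
      using card_insert_le_m1 less.prems(1) by (simp add: card_insert_if)
    ultimately have "card ?Q \<le> card PP - 1" using \<open>card PP \<ge> 2\<close> by simp
    then have lt: "card ?Q < card PP" using \<open>card PP \<ge> 2\<close> by simp
    have "chainP (card ?Q) G ?Q" using less.hyps[OF lt fQ] by blast
    then have "chainP (card PP) G ?Q" using chainP_mono lt by fastforce
    then show ?thesis by (rule cstep[OF red_ok_card[OF less.prems(1)] AB])
  qed
qed

lemma rep_graph:
  assumes "is_graph G"
  shows "rep G (graph_trigraph G) (\<lambda>x. {x})"
proof -
  have v: "tverts (graph_trigraph G) = fst G" and b: "tblack (graph_trigraph G) = snd G"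
    and r: "tred (graph_trigraph G) = {}"
    by (simp_all add: graph_trigraph_def tverts_def tblack_def tred_def)
  have wf: "wf_trigraph (graph_trigraph G)"
    using assms unfolding wf_trigraph_def v b r is_graph_def by simp
  have c: "\<And>x y. cmpl G {x} {y} = ({x,y} \<in> snd G)" unfolding cmpl_def by simp
  show ?thesis unfolding rep_def v b r
  proof (intro conjI ballI impI)
    show "wf_trigraph (graph_trigraph G)" by (rule wf)
  next
    fix x y :: 'a assume "x \<noteq> y"
    then show "{x} \<inter> {y} = {}" by simp
  next
    fix x y :: 'a
    show "({x, y} \<in> snd G) = cmpl G {x} {y}" using c by simp
    show "({x, y} \<in> {}) = mixd G {x} {y}" using mixd_single by simp
  qed simp
qed

definition singl :: "'a set \<Rightarrow> 'a set set" where "singl V = (\<lambda>x. {x}) ` V"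

lemma seq_iff_chainP:
  assumes "is_graph G" "fst G \<noteq> {}"
  shows "(\<exists>S. d_sequence d G S) \<longleftrightarrow> chainP d G (singl (fst G))"
proof
  assume "\<exists>S. d_sequence d G S"
  then have "chain d (graph_trigraph G)" using seq_to_chain by blast
  then show "chainP d G (singl (fst G))"
    using chain_to_chainP[OF _ rep_graph[OF assms(1)]] unfolding singl_def
    by (simp add: graph_trigraph_def tverts_def)
next
  assume "chainP d G (singl (fst G))"
  then have "chain d (graph_trigraph G)"
    by (intro chainP_to_chain[OF _ rep_graph[OF assms(1)]]) (simp_all add: singl_def graph_trigraph_def tverts_def)
  then obtain S where S: "S \<noteq> []" "S ! 0 = graph_trigraph G" "length S = card (tverts (graph_trigraph G))"
     "\<forall>i < length S. is_d_trigraph d (S ! i) \<and> card (tverts (S ! i)) = card (tverts (graph_trigraph G)) - i"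
     "card (tverts (last S)) = 1"
     "\<forall>i. Suc i < length S \<longrightarrow> contraction_step (S ! i) (S ! Suc i)" using chain_to_seq by blast
  have "card (tverts (graph_trigraph G)) = card (fst G)" by (simp add: graph_trigraph_def tverts_def)
  then have "d_sequence d G S" unfolding d_sequence_def using S by simp
  then show "\<exists>S. d_sequence d G S" by blast
qed

lemma tw_props:
  assumes "is_graph G" "fst G \<noteq> {}"
  shows "chainP (twin_width G) G (singl (fst G))"
    and "\<And>d. chainP d G (singl (fst G)) \<Longrightarrow> twin_width G \<le> d"
proof -
  have fin: "finite (fst G)" using assms unfolding is_graph_def by blast
  have ex: "chainP (card (singl (fst G))) G (singl (fst G))"
    using chainP_exists fin assms(2) unfolding singl_def by blast
  have tw: "twin_width G = (LEAST d. chainP d G (singl (fst G)))"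
    unfolding twin_width_def using seq_iff_chainP[OF assms] by simp
  show "chainP (twin_width G) G (singl (fst G))" unfolding tw using ex by (rule LeastI)
  show "\<And>d. chainP d G (singl (fst G)) \<Longrightarrow> twin_width G \<le> d" unfolding tw by (rule Least_le)
qed

definition part :: "'a graph \<Rightarrow> 'a set set \<Rightarrow> bool" where
  "part G PP \<longleftrightarrow> finite PP \<and> \<Union>PP = fst G \<and> {} \<notin> PP \<and> (\<forall>A\<in>PP. \<forall>B\<in>PP. A \<noteq> B \<longrightarrow> A \<inter> B = {})"

lemma partI:
  assumes "finite PP" "\<Union>PP = fst G" "{} \<notin> PP" "\<And>A B. A \<in> PP \<Longrightarrow> B \<in> PP \<Longrightarrow> A \<noteq> B \<Longrightarrow> A \<inter> B = {}"
  shows "part G PP"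
  using assms unfolding part_def by blast

lemma partD:
  assumes "part G PP"
  shows "finite PP" "\<Union>PP = fst G" "{} \<notin> PP" "\<And>A B. A \<in> PP \<Longrightarrow> B \<in> PP \<Longrightarrow> A \<noteq> B \<Longrightarrow> A \<inter> B = {}"
  using assms unfolding part_def by blast+

lemma part_merge:
  assumes pt: "part G PP" and AB: "A \<in> PP" "B \<in> PP" "A \<noteq> B"
  shows "part G (PP - {A,B} \<union> {A \<union> B})"
proof (rule partI)
  note f = partD(1)[OF pt] and U = partD(2)[OF pt] and ne = partD(3)[OF pt] and dj = partD(4)[OF pt]
  show "finite (PP - {A,B} \<union> {A \<union> B})" using f by simp
  have "\<Union>(PP - {A,B} \<union> {A \<union> B}) = \<Union>PP" using AB by auto
  then show "\<Union>(PP - {A,B} \<union> {A \<union> B}) = fst G" using U by simp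
  show "{} \<notin> PP - {A,B} \<union> {A \<union> B}" using ne AB by auto
  fix X Y assume X: "X \<in> PP - {A,B} \<union> {A \<union> B}" and Y: "Y \<in> PP - {A,B} \<union> {A \<union> B}" and XY: "X \<noteq> Y"
  show "X \<inter> Y = {}"
  proof (cases "X = A \<union> B")
    case True
    then have Yp: "Y \<in> PP" "Y \<noteq> A" "Y \<noteq> B" using Y XY by auto
    have "A \<inter> Y = {}" "B \<inter> Y = {}" using dj[OF AB(1) Yp(1)] dj[OF AB(2) Yp(1)] Yp by auto
    then show ?thesis using True by auto
  next
    case False
    then have Xp: "X \<in> PP" "X \<noteq> A" "X \<noteq> B" using X by auto
    show ?thesis
    proof (cases "Y = A \<union> B")
      case True
      have "A \<inter> X = {}" "B \<inter> X = {}" using dj[OF AB(1) Xp(1)] dj[OF AB(2) Xp(1)] Xp by auto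
      then show ?thesis using True by auto
    next
      case False
      then have "Y \<in> PP" using Y by auto
      then show ?thesis using Xp dj XY by auto
    qed
  qed
qed

lemma part_sub: "part G PP \<Longrightarrow> X \<in> PP \<Longrightarrow> X \<subseteq> fst G"
  using partD(2) by blast

lemma red_ok_map:
  assumes ok: "red_ok d G PP" and pt: "part G PP"
    and hM: "\<And>X Y. X \<subseteq> fst G \<Longrightarrow> Y \<subseteq> fst G \<Longrightarrow> X \<inter> Y = {} \<Longrightarrow> mixd G' (h X) (h Y) \<Longrightarrow> mixd G X Y"
    and cM: "\<And>c X. c \<in> C \<Longrightarrow> X \<subseteq> fst G \<Longrightarrow> \<not> mixd G' c (h X)"
    and cC: "\<And>c c'. c \<in> C \<Longrightarrow> c' \<in> C \<Longrightarrow> \<not> mixd G' c c'"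
    and dd: "d \<le> d'"
  shows "red_ok d' G' (h ` PP - {{}} \<union> C)"
  unfolding red_ok_def
proof
  let ?Q = "h ` PP - {{}} \<union> C"
  fix A' assume A': "A' \<in> ?Q"
  have fin: "finite PP" using partD(1)[OF pt] .
  show "card {B' \<in> ?Q. B' \<noteq> A' \<and> mixd G' A' B'} \<le> d'"
  proof (cases "A' \<in> C")
    case True
    have e: "{B' \<in> ?Q. B' \<noteq> A' \<and> mixd G' A' B'} = {}"
    proof -
      { fix B' assume B': "B' \<in> ?Q" "mixd G' A' B'"
        have False
        proof (cases "B' \<in> C")
          case True then show False using cC[of A' B'] \<open>A' \<in> C\<close> B' by blast
        next
          case False
          then obtain Y where "Y \<in> PP" "B' = h Y" using B' by blast
          then show False using cM[of A' Y] \<open>A' \<in> C\<close> B' part_sub[OF pt] by blast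
        qed }
      then show ?thesis by blast
    qed
    show ?thesis by (subst e) simp
  next
    case False
    then obtain X where X: "X \<in> PP" "A' = h X" using A' by blast
    have "{B' \<in> ?Q. B' \<noteq> A' \<and> mixd G' A' B'} \<subseteq> h ` {Y \<in> PP. Y \<noteq> X \<and> mixd G X Y}"
    proof
      fix B' assume B': "B' \<in> {B' \<in> ?Q. B' \<noteq> A' \<and> mixd G' A' B'}"
      have "B' \<notin> C"
      proof
        assume "B' \<in> C"
        then have "\<not> mixd G' B' (h X)" using cM part_sub[OF pt X(1)] by blast
        then show False using B' X mixd_sym[of G' "h X" B'] by simp
      qed
      then obtain Y where Y: "Y \<in> PP" "B' = h Y" using B' by blast
      have "Y \<noteq> X" using Y X B' by blast
      then have "X \<inter> Y = {}" using partD(4)[OF pt X(1) Y(1)] by blast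
      moreover have "mixd G' (h X) (h Y)" using B' X(2) Y(2) by simp
      ultimately have "mixd G X Y" using hM[of X Y] part_sub[OF pt X(1)] part_sub[OF pt Y(1)] by blast
      then show "B' \<in> h ` {Y \<in> PP. Y \<noteq> X \<and> mixd G X Y}" using Y \<open>Y \<noteq> X\<close> by blast
    qed
    then have "card {B' \<in> ?Q. B' \<noteq> A' \<and> mixd G' A' B'} \<le> card (h ` {Y \<in> PP. Y \<noteq> X \<and> mixd G X Y})"
      using fin by (intro card_mono) auto
    also have "\<dots> \<le> card {Y \<in> PP. Y \<noteq> X \<and> mixd G X Y}" by (rule card_image_le) (use fin in auto)
    also have "\<dots> \<le> d" using ok X unfolding red_ok_def by blast
    finally show ?thesis using dd by simp
  qed
qed

lemma chainP_map:
  assumes ch: "chainP d G PP" and pt: "part G PP"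
    and hU: "\<And>X Y. h (X \<union> Y) = h X \<union> h Y"
    and hD: "\<And>X Y. X \<subseteq> fst G \<Longrightarrow> Y \<subseteq> fst G \<Longrightarrow> X \<inter> Y = {} \<Longrightarrow> h X \<inter> h Y = {}"
    and hM: "\<And>X Y. X \<subseteq> fst G \<Longrightarrow> Y \<subseteq> fst G \<Longrightarrow> X \<inter> Y = {} \<Longrightarrow> mixd G' (h X) (h Y) \<Longrightarrow> mixd G X Y"
    and cM: "\<And>c X. c \<in> C \<Longrightarrow> X \<subseteq> fst G \<Longrightarrow> \<not> mixd G' c (h X)"
    and cC: "\<And>c c'. c \<in> C \<Longrightarrow> c' \<in> C \<Longrightarrow> \<not> mixd G' c c'"
    and cD: "\<And>c X. c \<in> C \<Longrightarrow> X \<subseteq> fst G \<Longrightarrow> c \<inter> h X = {}"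
    and dd: "d \<le> d'"
    and base: "chainP d' G' ({h (fst G)} - {{}} \<union> C)"
  shows "chainP d' G' (h ` PP - {{}} \<union> C)"
  using ch pt
proof (induction rule: chainP.induct)
  case (cbase PP)
  then obtain X where X: "PP = {X}" by (meson card_1_singletonE)
  then have "X = fst G" using partD(2)[OF cbase.prems] by simp
  then show ?case using base X by simp
next
  case (cstep PP A B)
  let ?M = "PP - {A,B} \<union> {A \<union> B}"
  let ?Q = "h ` PP - {{}} \<union> C"
  have ptM: "part G ?M" by (rule part_merge[OF cstep.prems cstep.hyps(2-4)])
  have IH: "chainP d' G' (h ` ?M - {{}} \<union> C)" using cstep.IH[OF ptM] .
  have Asub: "A \<subseteq> fst G" and Bsub: "B \<subseteq> fst G"
    using part_sub[OF cstep.prems] cstep.hyps(2,3) by auto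
  have ABdj: "A \<inter> B = {}" using partD(4)[OF cstep.prems cstep.hyps(2-4)] .
  have imM: "h ` ?M = h ` (PP - {A,B}) \<union> {h A \<union> h B}" using hU by simp
  have imP: "h ` PP = h ` (PP - {A,B}) \<union> {h A, h B}" using cstep.hyps(2,3) by blast
  show ?case
  proof (cases "h A = {} \<or> h B = {}")
    case True
    have "h ` ?M - {{}} = h ` PP - {{}}"
    proof (cases "h A = {}")
      case True then show ?thesis unfolding imM imP by auto
    next
      case False then have "h B = {}" using \<open>h A = {} \<or> h B = {}\<close> by blast
      then show ?thesis unfolding imM imP by auto
    qed
    then show ?thesis using IH by simp
  next
    case False
    then have neA: "h A \<noteq> {}" and neB: "h B \<noteq> {}" by auto
    have hAB: "h A \<inter> h B = {}" using hD[OF Asub Bsub ABdj] .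
    have ne: "h A \<noteq> h B" using hAB neA by blast
    have AQ: "h A \<in> ?Q" and BQ: "h B \<in> ?Q" using neA neB cstep.hyps(2,3) by auto
    have AC: "h A \<notin> C" using cD[OF _ Asub] neA by blast
    have BC: "h B \<notin> C" using cD[OF _ Bsub] neB by blast
    have k: "\<And>X. X \<in> PP - {A,B} \<Longrightarrow> h X \<noteq> h A \<and> h X \<noteq> h B"
    proof -
      fix X assume X: "X \<in> PP - {A,B}"
      then have Xs: "X \<subseteq> fst G" using part_sub[OF cstep.prems] by blast
      have "X \<inter> A = {}" "X \<inter> B = {}" using partD(4)[OF cstep.prems] X cstep.hyps(2,3) by auto
      then have "h X \<inter> h A = {}" "h X \<inter> h B = {}" using hD[OF Xs Asub] hD[OF Xs Bsub] by auto
      then show "h X \<noteq> h A \<and> h X \<noteq> h B" using neA neB by auto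
    qed
    have eq: "?Q - {h A, h B} \<union> {h A \<union> h B} = h ` ?M - {{}} \<union> C"
    proof
      show "?Q - {h A, h B} \<union> {h A \<union> h B} \<subseteq> h ` ?M - {{}} \<union> C"
        unfolding imM imP using neA by auto
      show "h ` ?M - {{}} \<union> C \<subseteq> ?Q - {h A, h B} \<union> {h A \<union> h B}"
        unfolding imM imP using k AC BC by auto
    qed
    have ok: "red_ok d' G' ?Q"
      by (rule red_ok_map[OF cstep.hyps(1) cstep.prems hM cM cC dd])
    show ?thesis by (rule chainP.cstep[OF ok AQ BQ ne]) (use IH eq in simp)
  qed
qed

lemma chainP_single: "chainP d G {X}"
proof (rule cbase)
  show "card {X} = 1" by simp
  show "red_ok d G {X}" unfolding red_ok_def
  proof
    fix A assume "A \<in> {X}"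
    then have e: "{B \<in> {X}. B \<noteq> A \<and> mixd G A B} = {}" by blast
    show "card {B \<in> {X}. B \<noteq> A \<and> mixd G A B} \<le> d" by (subst e) simp
  qed
qed

lemma part_singl: "finite (fst G) \<Longrightarrow> part G (singl (fst G))"
  unfolding singl_def by (rule partI) auto

lemma sub_vs: "fst (substitute G1 u G2) = Inl ` (fst G1 - {u}) \<union> Inr ` fst G2"
  unfolding substitute_def by simp

lemma sub_es: "snd (substitute G1 u G2) = {Inl ` e | e. e \<in> snd G1 \<and> u \<notin> e}
       \<union> {Inr ` e | e. e \<in> snd G2}
       \<union> {{Inl x, Inr y} | x y. x \<in> fst G1 - {u} \<and> {u, x} \<in> snd G1 \<and> y \<in> fst G2}"
  unfolding substitute_def by simp

lemma Inr_img_eq: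
  fixes e :: "'b set" and a b :: 'b
  assumes h: "{Inr a, Inr b} = (Inr ` e :: ('a + 'b) set)"
  shows "e = {a,b}"
proof -
  have v: "(Inr :: 'b \<Rightarrow> 'a + 'b) -` (Inr ` e) = e" by (rule inj_vimage_image_eq) simp
  have "e = (Inr :: 'b \<Rightarrow> 'a + 'b) -` {Inr a, Inr b}" unfolding h using v by simp
  then show "e = {a,b}" by auto
qed

lemma Inl_img_eq:
  fixes e :: "'a set" and a b :: 'a
  assumes h: "{Inl a, Inl b} = (Inl ` e :: ('a + 'b) set)"
  shows "e = {a,b}"
proof -
  have v: "(Inl :: 'a \<Rightarrow> 'a + 'b) -` (Inl ` e) = e" by (rule inj_vimage_image_eq) simp
  have "e = (Inl :: 'a \<Rightarrow> 'a + 'b) -` {Inl a, Inl b}" unfolding h using v by simp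
  then show "e = {a,b}" by auto
qed

lemma notin_img: "x \<in> S \<Longrightarrow> (\<And>e. x \<notin> g e) \<Longrightarrow> S \<notin> {g e | e. P e}"
proof
  assume a: "x \<in> S" "\<And>e. x \<notin> g e" "S \<in> {g e | e. P e}"
  then obtain e where "S = g e" by blast
  then show False using a(1,2) by simp
qed

lemma notin_crossL: "(\<And>x. Inl x \<notin> S) \<Longrightarrow> S \<notin> {{Inl x, Inr y} | x y. Q x y}"
proof
  assume a: "\<And>x. Inl x \<notin> S" "S \<in> {{Inl x, Inr y} | x y. Q x y}"
  then obtain x y where "S = {Inl x, Inr y}" by blast
  then show False using a(1)[of x] by simp
qed
lemma notin_crossR: "(\<And>y. Inr y \<notin> S) \<Longrightarrow> S \<notin> {{Inl x, Inr y} | x y. Q x y}"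
proof
  assume a: "\<And>y. Inr y \<notin> S" "S \<in> {{Inl x, Inr y} | x y. Q x y}"
  then obtain x y where "S = {Inl x, Inr y}" by blast
  then show False using a(1)[of y] by simp
qed

lemma sub_e1:
  fixes G1 :: "'a graph" and G2 :: "'b graph"
  shows "{Inr a, Inr b} \<in> snd (substitute G1 u G2) \<longleftrightarrow> {a,b} \<in> snd G2"
proof -
  have r: "({Inr a, Inr b} :: ('a + 'b) set) = Inr ` {a,b}" by simp
  have n1: "({Inr a, Inr b} :: ('a + 'b) set) \<notin> {Inl ` e | e. e \<in> snd G1 \<and> u \<notin> e}"
    by (rule notin_img[of "Inr a" _ "\<lambda>e. Inl ` e" "\<lambda>e. e \<in> snd G1 \<and> u \<notin> e"]) auto
  have n2: "({Inr a, Inr b} :: ('a + 'b) set) \<notin> {{Inl x, Inr y} | x y. x \<in> fst G1 - {u} \<and> {u, x} \<in> snd G1 \<and> y \<in> fst G2}"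
    by (rule notin_crossL) simp
  have m: "({Inr a, Inr b} :: ('a + 'b) set) \<in> {Inr ` e | e. e \<in> snd G2} \<longleftrightarrow> {a,b} \<in> snd G2"
  proof
    assume "({Inr a, Inr b} :: ('a + 'b) set) \<in> {Inr ` e | e. e \<in> snd G2}"
    then obtain e where e: "({Inr a, Inr b} :: ('a + 'b) set) = Inr ` e" "e \<in> snd G2" by blast
    have "e = {a,b}" by (rule Inr_img_eq[OF e(1)])
    then show "{a,b} \<in> snd G2" using e(2) by simp
  next
    assume ab: "{a,b} \<in> snd G2"
    show "({Inr a, Inr b} :: ('a + 'b) set) \<in> {Inr ` e | e. e \<in> snd G2}"
      unfolding r using ab by (intro CollectI exI[of _ "{a,b}"]) simp
  qed
  show ?thesis unfolding sub_es by (simp only: Un_iff n1 n2 m simp_thms)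
qed

lemma sub_e2:
  fixes G1 :: "'a graph" and G2 :: "'b graph"
  shows "{Inl a, Inl b} \<in> snd (substitute G1 u G2) \<longleftrightarrow> {a,b} \<in> snd G1 \<and> a \<noteq> u \<and> b \<noteq> u"
proof -
  have r: "({Inl a, Inl b} :: ('a + 'b) set) = Inl ` {a,b}" by simp
  have n1: "({Inl a, Inl b} :: ('a + 'b) set) \<notin> {Inr ` e | e. e \<in> snd G2}"
    by (rule notin_img[of "Inl a" _ "\<lambda>e. Inr ` e" "\<lambda>e. e \<in> snd G2"]) auto
  have n2: "({Inl a, Inl b} :: ('a + 'b) set) \<notin> {{Inl x, Inr y} | x y. x \<in> fst G1 - {u} \<and> {u, x} \<in> snd G1 \<and> y \<in> fst G2}"
    by (rule notin_crossR) simp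
  have m: "({Inl a, Inl b} :: ('a + 'b) set) \<in> {Inl ` e | e. e \<in> snd G1 \<and> u \<notin> e} \<longleftrightarrow> {a,b} \<in> snd G1 \<and> u \<notin> {a,b}"
  proof
    assume "({Inl a, Inl b} :: ('a + 'b) set) \<in> {Inl ` e | e. e \<in> snd G1 \<and> u \<notin> e}"
    then obtain e where e: "({Inl a, Inl b} :: ('a + 'b) set) = Inl ` e" "e \<in> snd G1" "u \<notin> e" by blast
    have "e = {a,b}" by (rule Inl_img_eq[OF e(1)])
    then show "{a,b} \<in> snd G1 \<and> u \<notin> {a,b}" using e(2,3) by simp
  next
    assume ab: "{a,b} \<in> snd G1 \<and> u \<notin> {a,b}"
    show "({Inl a, Inl b} :: ('a + 'b) set) \<in> {Inl ` e | e. e \<in> snd G1 \<and> u \<notin> e}"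
      unfolding r using ab by (intro CollectI exI[of _ "{a,b}"]) simp
  qed
  show ?thesis unfolding sub_es by (simp only: Un_iff n1 n2 m simp_thms insert_iff) blast
qed

lemma sub_e3:
  fixes G1 :: "'a graph" and G2 :: "'b graph"
  shows "{Inl a, Inr b} \<in> snd (substitute G1 u G2) \<longleftrightarrow> a \<in> fst G1 - {u} \<and> {u,a} \<in> snd G1 \<and> b \<in> fst G2"
proof -
  have n1: "({Inl a, Inr b} :: ('a + 'b) set) \<notin> {Inr ` e | e. e \<in> snd G2}"
    by (rule notin_img[of "Inl a" _ "\<lambda>e. Inr ` e" "\<lambda>e. e \<in> snd G2"]) auto
  have n2: "({Inl a, Inr b} :: ('a + 'b) set) \<notin> {Inl ` e | e. e \<in> snd G1 \<and> u \<notin> e}"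
    by (rule notin_img[of "Inr b" _ "\<lambda>e. Inl ` e" "\<lambda>e. e \<in> snd G1 \<and> u \<notin> e"]) auto
  have 3: "\<And>x y. ({Inl a, Inr b} :: ('a + 'b) set) = {Inl x, Inr y} \<longleftrightarrow> x = a \<and> y = b" by (auto simp: doubleton_eq_iff)
  have m: "({Inl a, Inr b} :: ('a + 'b) set) \<in> {{Inl x, Inr y} | x y. x \<in> fst G1 - {u} \<and> {u, x} \<in> snd G1 \<and> y \<in> fst G2}
      \<longleftrightarrow> a \<in> fst G1 - {u} \<and> {u,a} \<in> snd G1 \<and> b \<in> fst G2"
    unfolding mem_Collect_eq 3 by blast
  show ?thesis unfolding sub_es by (simp only: Un_iff n1 n2 m simp_thms)
qed

lemma sub_is_graph:
  assumes "is_graph G1" "is_graph G2"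
  shows "is_graph (substitute G1 u G2)"
  unfolding is_graph_def
proof
  show "finite (fst (substitute G1 u G2))" using assms unfolding sub_vs is_graph_def by simp
  show "snd (substitute G1 u G2) \<subseteq> pairs_on (fst (substitute G1 u G2))"
  proof
    fix e assume "e \<in> snd (substitute G1 u G2)"
    then consider e' where "e = Inl ` e'" "e' \<in> snd G1" "u \<notin> e'"
      | e' where "e = Inr ` e'" "e' \<in> snd G2"
      | x y where "e = {Inl x, Inr y}" "x \<in> fst G1 - {u}" "y \<in> fst G2"
      unfolding sub_es by blast
    then show "e \<in> pairs_on (fst (substitute G1 u G2))"
    proof cases
      case 1
      then obtain a b where "e' = {a,b}" "a \<in> fst G1" "b \<in> fst G1" "a \<noteq> b"
        using assms(1) pairs_onD unfolding is_graph_def by blast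
      then show ?thesis using 1 unfolding sub_vs pairs_on_def by auto
    next
      case 2
      then obtain a b where "e' = {a,b}" "a \<in> fst G2" "b \<in> fst G2" "a \<noteq> b"
        using assms(2) pairs_onD unfolding is_graph_def by blast
      then show ?thesis using 2 unfolding sub_vs pairs_on_def by auto
    next
      case 3
      then show ?thesis unfolding sub_vs pairs_on_def by auto
    qed
  qed
qed

lemma embed_lb:
  fixes G :: "'a graph" and H :: "'c graph" and g :: "'a \<Rightarrow> 'c"
  assumes gH: "is_graph H" and ne: "fst G \<noteq> {}"
    and inj: "inj_on g (fst G)" and img: "g ` fst G \<subseteq> fst H"
    and edge: "\<And>a b. a \<in> fst G \<Longrightarrow> b \<in> fst G \<Longrightarrow> a \<noteq> b \<Longrightarrow> ({a,b} \<in> snd G \<longleftrightarrow> {g a, g b} \<in> snd H)"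
    and ch: "chainP d H (singl (fst H))"
  shows "chainP d G (singl (fst G))"
proof -
  define h where "h X = {v \<in> fst G. g v \<in> X}" for X
  have pt: "part H (singl (fst H))" using part_singl gH unfolding is_graph_def by blast
  have hG: "h (fst H) = fst G" unfolding h_def using img by auto
  have "chainP d G (h ` singl (fst H) - {{}} \<union> {})"
  proof (rule chainP_map[OF ch pt])
    show "\<And>X Y. h (X \<union> Y) = h X \<union> h Y" unfolding h_def by auto
    show "\<And>X Y. X \<subseteq> fst H \<Longrightarrow> Y \<subseteq> fst H \<Longrightarrow> X \<inter> Y = {} \<Longrightarrow> h X \<inter> h Y = {}"
      unfolding h_def by auto
    show "\<And>X Y. X \<subseteq> fst H \<Longrightarrow> Y \<subseteq> fst H \<Longrightarrow> X \<inter> Y = {} \<Longrightarrow> mixd G (h X) (h Y) \<Longrightarrow> mixd H X Y"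
    proof -
      fix X Y assume dj: "X \<inter> Y = {}" and m: "mixd G (h X) (h Y)"
      show "mixd H X Y"
      proof (rule mixd_transfer[where bk = g, OF _ _ _ m])
        show "\<forall>p\<in>h X. g p \<in> X" unfolding h_def by auto
        show "\<forall>q\<in>h Y. g q \<in> Y" unfolding h_def by auto
        show "\<forall>p\<in>h X. \<forall>q\<in>h Y. ({p,q} \<in> snd G \<longleftrightarrow> {g p, g q} \<in> snd H)"
        proof (intro ballI)
          fix p q assume p: "p \<in> h X" and q: "q \<in> h Y"
          have pq: "p \<in> fst G" "q \<in> fst G" "g p \<in> X" "g q \<in> Y" using p q unfolding h_def by auto
          then have "p \<noteq> q" using dj by auto
          then show "({p,q} \<in> snd G \<longleftrightarrow> {g p, g q} \<in> snd H)" using edge pq(1,2) by blast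
        qed
      qed
    qed
    show "\<And>c X. c \<in> {} \<Longrightarrow> X \<subseteq> fst H \<Longrightarrow> \<not> mixd G c (h X)" by simp
    show "\<And>c c'. c \<in> {} \<Longrightarrow> c' \<in> {} \<Longrightarrow> \<not> mixd G c c'" by simp
    show "\<And>c X. c \<in> {} \<Longrightarrow> X \<subseteq> fst H \<Longrightarrow> c \<inter> h X = {}" by simp
    show "d \<le> d" by simp
    have "{h (fst H)} - {{}} \<union> {} = {fst G}" using hG ne by simp
    then show "chainP d G ({h (fst H)} - {{}} \<union> {})" using chainP_single by simp
  qed
  moreover have "h ` singl (fst H) - {{}} \<union> {} = singl (fst G)"
  proof -
    have hs: "\<And>v. v \<in> fst G \<Longrightarrow> h {g v} = {v}"
    proof -
      fix v assume v: "v \<in> fst G"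
      have "\<And>w. w \<in> fst G \<Longrightarrow> g w = g v \<longleftrightarrow> w = v" using inj v unfolding inj_on_def by blast
      then show "h {g v} = {v}" unfolding h_def using v by auto
    qed
    show ?thesis
    proof
      show "h ` singl (fst H) - {{}} \<union> {} \<subseteq> singl (fst G)"
      proof
        fix Z assume "Z \<in> h ` singl (fst H) - {{}} \<union> {}"
        then obtain x where x: "Z = h {x}" "Z \<noteq> {}" unfolding singl_def by blast
        then obtain v where "v \<in> Z" by blast
        then have v: "v \<in> fst G" "g v = x" using x(1) unfolding h_def by auto
        then have "Z = {v}" using hs[OF v(1)] x(1) by simp
        then show "Z \<in> singl (fst G)" using v unfolding singl_def by blast
      qed
      show "singl (fst G) \<subseteq> h ` singl (fst H) - {{}} \<union> {}"
      proof
        fix Z assume "Z \<in> singl (fst G)"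
        then obtain v where v: "v \<in> fst G" "Z = {v}" unfolding singl_def by blast
        have "g v \<in> fst H" using img v by blast
        then have "h {g v} \<in> h ` singl (fst H)" unfolding singl_def by blast
        then show "Z \<in> h ` singl (fst H) - {{}} \<union> {}" using hs[OF v(1)] v(2) by simp
      qed
    qed
  qed
  ultimately show ?thesis by simp
qed

lemma stage1:
  fixes G1 :: "'a graph" and G2 :: "'b graph"
  assumes g1: "is_graph G1" and ne2: "fst G2 \<noteq> {}" and uG: "u \<in> fst G1"
    and ch: "chainP d1 G1 (singl (fst G1))" and dd: "d1 \<le> m"
  shows "chainP m (substitute G1 u G2) ((\<lambda>a. {Inl a}) ` (fst G1 - {u}) \<union> {Inr ` fst G2})"
proof -
  let ?S = "substitute G1 u G2"
  define h :: "'a set \<Rightarrow> ('a + 'b) set" where "h X = Inl ` (X - {u}) \<union> (if u \<in> X then Inr ` fst G2 else {})" for X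
  have pt: "part G1 (singl (fst G1))" using part_singl g1 unfolding is_graph_def by blast
  have "chainP m ?S (h ` singl (fst G1) - {{}} \<union> {})"
  proof (rule chainP_map[OF ch pt])
    show "\<And>X Y. h (X \<union> Y) = h X \<union> h Y" unfolding h_def by auto
    show "\<And>X Y. X \<subseteq> fst G1 \<Longrightarrow> Y \<subseteq> fst G1 \<Longrightarrow> X \<inter> Y = {} \<Longrightarrow> h X \<inter> h Y = {}"
      unfolding h_def by auto
    show "\<And>X Y. X \<subseteq> fst G1 \<Longrightarrow> Y \<subseteq> fst G1 \<Longrightarrow> X \<inter> Y = {} \<Longrightarrow> mixd ?S (h X) (h Y) \<Longrightarrow> mixd G1 X Y"
    proof -
      fix X Y assume XS: "X \<subseteq> fst G1" and YS: "Y \<subseteq> fst G1" and dj: "X \<inter> Y = {}" and m: "mixd ?S (h X) (h Y)"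
      define bk :: "'a + 'b \<Rightarrow> 'a" where "bk p = (case p of Inl a \<Rightarrow> a | Inr _ \<Rightarrow> u)" for p
      have memh: "\<And>p Z. p \<in> h Z \<Longrightarrow> (\<exists>a. p = Inl a \<and> a \<in> Z \<and> a \<noteq> u) \<or> (\<exists>b. p = Inr b \<and> u \<in> Z \<and> b \<in> fst G2)"
        unfolding h_def by (auto split: if_splits)
      show "mixd G1 X Y"
      proof (rule mixd_transfer[where bk = bk, OF _ _ _ m])
        show "\<forall>p\<in>h X. bk p \<in> X" using memh[of _ X] unfolding bk_def by fastforce
        show "\<forall>q\<in>h Y. bk q \<in> Y" using memh[of _ Y] unfolding bk_def by fastforce
        show "\<forall>p\<in>h X. \<forall>q\<in>h Y. ({p,q} \<in> snd ?S \<longleftrightarrow> {bk p, bk q} \<in> snd G1)"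
        proof (intro ballI)
          fix p q assume p: "p \<in> h X" and q: "q \<in> h Y"
          show "{p,q} \<in> snd ?S \<longleftrightarrow> {bk p, bk q} \<in> snd G1"
          proof (cases "\<exists>a. p = Inl a \<and> a \<in> X \<and> a \<noteq> u")
            case True
            then obtain a where a: "p = Inl a" "a \<in> X" "a \<noteq> u" by blast
            show ?thesis
            proof (cases "\<exists>b. q = Inl b \<and> b \<in> Y \<and> b \<noteq> u")
              case True
              then obtain b where b: "q = Inl b" "b \<in> Y" "b \<noteq> u" by blast
              show ?thesis using a b sub_e2[of a b G1 u G2] unfolding bk_def by simp
            next
              case False
              then obtain b where b: "q = Inr b" "u \<in> Y" "b \<in> fst G2" using memh[OF q] by blast
              have "a \<in> fst G1" using a XS by blast
              then show ?thesis using a b sub_e3[of a b G1 u G2] unfolding bk_def by (simp add: insert_commute)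
            qed
          next
            case False
            then obtain a where a: "p = Inr a" "u \<in> X" "a \<in> fst G2" using memh[OF p] by blast
            show ?thesis
            proof (cases "\<exists>b. q = Inl b \<and> b \<in> Y \<and> b \<noteq> u")
              case True
              then obtain b where b: "q = Inl b" "b \<in> Y" "b \<noteq> u" by blast
              have "b \<in> fst G1" using b YS by blast
              have e: "{p, q} = {Inl b, Inr a}" using a b by (simp add: insert_commute)
              show ?thesis unfolding e using a b sub_e3[of b a G1 u G2] \<open>b \<in> fst G1\<close> unfolding bk_def by simp
            next
              case False
              then obtain b where b: "q = Inr b" "u \<in> Y" "b \<in> fst G2" using memh[OF q] by blast
              then show ?thesis using a dj by blast
            qed
          qed
        qed
      qed
    qed
    show "\<And>c X. c \<in> {} \<Longrightarrow> X \<subseteq> fst G1 \<Longrightarrow> \<not> mixd ?S c (h X)" by simp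
    show "\<And>c c'. c \<in> {} \<Longrightarrow> c' \<in> {} \<Longrightarrow> \<not> mixd ?S c c'" by simp
    show "\<And>c X. c \<in> {} \<Longrightarrow> X \<subseteq> fst G1 \<Longrightarrow> c \<inter> h X = {}" by simp
    show "d1 \<le> m" by (rule dd)
    have "h (fst G1) \<noteq> {}" unfolding h_def using uG ne2 by auto
    then have "{h (fst G1)} - {{}} \<union> {} = {h (fst G1)}" by simp
    then show "chainP m ?S ({h (fst G1)} - {{}} \<union> {})" using chainP_single by simp
  qed
  moreover have "h ` singl (fst G1) - {{}} \<union> {} = (\<lambda>a. {Inl a}) ` (fst G1 - {u}) \<union> {Inr ` fst G2}"
  proof -
    have h1: "\<And>a. a \<noteq> u \<Longrightarrow> h {a} = {Inl a}" unfolding h_def by auto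
    have h2: "h {u} = Inr ` fst G2" unfolding h_def by auto
    have "h ` singl (fst G1) = (\<lambda>a. {Inl a}) ` (fst G1 - {u}) \<union> {Inr ` fst G2}"
    proof
      show "h ` singl (fst G1) \<subseteq> (\<lambda>a. {Inl a}) ` (fst G1 - {u}) \<union> {Inr ` fst G2}"
      proof
        fix Z assume "Z \<in> h ` singl (fst G1)"
        then obtain a where a: "a \<in> fst G1" "Z = h {a}" unfolding singl_def by blast
        show "Z \<in> (\<lambda>a. {Inl a}) ` (fst G1 - {u}) \<union> {Inr ` fst G2}"
        proof (cases "a = u")
          case True then show ?thesis using a h2 by simp
        next
          case False then show ?thesis using a h1[OF False] by blast
        qed
      qed
      show "(\<lambda>a. {Inl a}) ` (fst G1 - {u}) \<union> {Inr ` fst G2} \<subseteq> h ` singl (fst G1)"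
      proof
        fix Z assume "Z \<in> (\<lambda>a. {Inl a}) ` (fst G1 - {u}) \<union> {Inr ` fst G2}"
        then consider a where "a \<in> fst G1" "a \<noteq> u" "Z = {Inl a}" | "Z = Inr ` fst G2" by blast
        then show "Z \<in> h ` singl (fst G1)"
        proof cases
          case 1 then have "Z = h {a}" using h1 by simp
          then show ?thesis using 1 unfolding singl_def by blast
        next
          case 2 then have "Z = h {u}" using h2 by simp
          then show ?thesis using uG unfolding singl_def by blast
        qed
      qed
    qed
    moreover have "{} \<notin> (\<lambda>a. {Inl a}) ` (fst G1 - {u}) \<union> {Inr ` fst G2}" using ne2 by auto
    ultimately show ?thesis by auto
  qed
  ultimately show ?thesis by simp
qed

lemma stage2:
  fixes G1 :: "'a graph" and G2 :: "'b graph"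
  assumes g2: "is_graph G2" and ne2: "fst G2 \<noteq> {}"
    and ch: "chainP d2 G2 (singl (fst G2))" and dd: "d2 \<le> m"
    and mid: "chainP m (substitute G1 u G2) ((\<lambda>a. {Inl a}) ` (fst G1 - {u}) \<union> {Inr ` fst G2})"
  shows "chainP m (substitute G1 u G2) (singl (fst (substitute G1 u G2)))"
proof -
  let ?S = "substitute G1 u G2"
  let ?C = "(\<lambda>a. {Inl a :: 'a + 'b}) ` (fst G1 - {u})"
  define h :: "'b set \<Rightarrow> ('a + 'b) set" where "h X = Inr ` X" for X
  have pt: "part G2 (singl (fst G2))" using part_singl g2 unfolding is_graph_def by blast
  have "chainP m ?S (h ` singl (fst G2) - {{}} \<union> ?C)"
  proof (rule chainP_map[OF ch pt])
    show "\<And>X Y. h (X \<union> Y) = h X \<union> h Y" unfolding h_def by auto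
    show "\<And>X Y. X \<subseteq> fst G2 \<Longrightarrow> Y \<subseteq> fst G2 \<Longrightarrow> X \<inter> Y = {} \<Longrightarrow> h X \<inter> h Y = {}"
      unfolding h_def by auto
    show "\<And>X Y. X \<subseteq> fst G2 \<Longrightarrow> Y \<subseteq> fst G2 \<Longrightarrow> X \<inter> Y = {} \<Longrightarrow> mixd ?S (h X) (h Y) \<Longrightarrow> mixd G2 X Y"
    proof -
      fix X Y assume m: "mixd ?S (h X) (h Y)"
      define bk :: "'a + 'b \<Rightarrow> 'b" where "bk p = (case p of Inr b \<Rightarrow> b | Inl _ \<Rightarrow> undefined)" for p
      show "mixd G2 X Y"
      proof (rule mixd_transfer[where bk = bk, OF _ _ _ m])
        show "\<forall>p\<in>h X. bk p \<in> X" unfolding h_def bk_def by auto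
        show "\<forall>q\<in>h Y. bk q \<in> Y" unfolding h_def bk_def by auto
        show "\<forall>p\<in>h X. \<forall>q\<in>h Y. ({p,q} \<in> snd ?S \<longleftrightarrow> {bk p, bk q} \<in> snd G2)"
        proof (intro ballI)
          fix p q assume p: "p \<in> h X" and q: "q \<in> h Y"
          then obtain a b where "p = Inr a" "q = Inr b" unfolding h_def by blast
          then show "{p,q} \<in> snd ?S \<longleftrightarrow> {bk p, bk q} \<in> snd G2" using sub_e1[of a b G1 u G2] unfolding bk_def by simp
        qed
      qed
    qed
    show "\<And>c X. c \<in> ?C \<Longrightarrow> X \<subseteq> fst G2 \<Longrightarrow> \<not> mixd ?S c (h X)"
    proof
      fix c X assume c: "c \<in> ?C" and X: "X \<subseteq> fst G2" and m: "mixd ?S c (h X)"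
      then obtain a where a: "c = {Inl a}" "a \<in> fst G1" "a \<noteq> u" by blast
      obtain p q where pq: "p \<in> c" "q \<in> h X" "{p,q} \<in> snd ?S" using m unfolding mixd_def by blast
      then obtain b where b: "p = Inl a" "q = Inr b" "b \<in> X" using a unfolding h_def by blast
      have adj: "{u,a} \<in> snd G1" using pq(3) b sub_e3[of a b G1 u G2] by simp
      have "cmpl ?S c (h X)" unfolding cmpl_def
      proof (intro ballI)
        fix p' q' assume "p' \<in> c" "q' \<in> h X"
        then obtain b' where "p' = Inl a" "q' = Inr b'" "b' \<in> X" using a unfolding h_def by blast
        then show "{p',q'} \<in> snd ?S" using sub_e3[of a b' G1 u G2] adj a X by auto
      qed
      then show False using m unfolding mixd_def by blast
    qed
    show "\<And>c c'. c \<in> ?C \<Longrightarrow> c' \<in> ?C \<Longrightarrow> \<not> mixd ?S c c'"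
    proof -
      fix c c' assume "c \<in> ?C" "c' \<in> ?C"
      then obtain a a' where "c = {Inl a}" "c' = {Inl a'}" by blast
      then show "\<not> mixd ?S c c'" using mixd_single by simp
    qed
    show "\<And>c X. c \<in> ?C \<Longrightarrow> X \<subseteq> fst G2 \<Longrightarrow> c \<inter> h X = {}" unfolding h_def by auto
    show "d2 \<le> m" by (rule dd)
    have "{h (fst G2)} - {{}} \<union> ?C = (\<lambda>a. {Inl a}) ` (fst G1 - {u}) \<union> {Inr ` fst G2}"
      unfolding h_def using ne2 by auto
    then show "chainP m ?S ({h (fst G2)} - {{}} \<union> ?C)" using mid by simp
  qed
  moreover have "h ` singl (fst G2) - {{}} \<union> ?C = singl (fst ?S)"
  proof -
    have "h ` singl (fst G2) = (\<lambda>b. {Inr b}) ` fst G2" unfolding h_def singl_def by auto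
    then have "h ` singl (fst G2) - {{}} = (\<lambda>b. {Inr b}) ` fst G2" by auto
    moreover have "singl (fst ?S) = ?C \<union> (\<lambda>b. {Inr b}) ` fst G2"
      unfolding singl_def sub_vs by auto
    ultimately show ?thesis by auto
  qed
  ultimately show ?thesis by simp
qed

theorem mainTheorem17:
  fixes G1 :: "'a graph" and G2 :: "'b graph" and u :: 'a
  assumes "is_graph G1" and "is_graph G2"
    and "fst G1 \<noteq> {}" and "fst G2 \<noteq> {}"
    and "u \<in> fst G1"
  shows "twin_width (substitute G1 u G2) = max (twin_width G1) (twin_width G2)"
proof -
  let ?S = "substitute G1 u G2"
  have gS: "is_graph ?S" by (rule sub_is_graph[OF assms(1,2)])
  obtain w where w: "w \<in> fst G2" using assms(4) by blast
  have neS: "fst ?S \<noteq> {}" using w unfolding sub_vs by blast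
  note t1 = tw_props[OF assms(1,3)] and t2 = tw_props[OF assms(2,4)] and ts = tw_props[OF gS neS]
  have up: "twin_width ?S \<le> max (twin_width G1) (twin_width G2)"
  proof -
    have "chainP (max (twin_width G1) (twin_width G2)) ?S ((\<lambda>a. {Inl a}) ` (fst G1 - {u}) \<union> {Inr ` fst G2})"
      by (rule stage1[OF assms(1,4,5) t1(1)]) simp
    then have "chainP (max (twin_width G1) (twin_width G2)) ?S (singl (fst ?S))"
      by (intro stage2[OF assms(2,4) t2(1)]) simp_all
    then show ?thesis by (rule ts(2))
  qed
  have lo1: "twin_width G1 \<le> twin_width ?S"
  proof -
    define g :: "'a \<Rightarrow> 'a + 'b" where "g v = (if v = u then Inr w else Inl v)" for v
    have inj: "inj_on g (fst G1)" unfolding inj_on_def g_def by auto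
    have img: "g ` fst G1 \<subseteq> fst ?S" unfolding g_def sub_vs using w by auto
    have edge: "\<And>a b. a \<in> fst G1 \<Longrightarrow> b \<in> fst G1 \<Longrightarrow> a \<noteq> b \<Longrightarrow> ({a,b} \<in> snd G1 \<longleftrightarrow> {g a, g b} \<in> snd ?S)"
    proof -
      fix a b assume a: "a \<in> fst G1" and b: "b \<in> fst G1" and ab: "a \<noteq> b"
      show "{a,b} \<in> snd G1 \<longleftrightarrow> {g a, g b} \<in> snd ?S"
      proof (cases "a = u")
        case True
        then have "b \<noteq> u" using ab by blast
        then have e: "{g a, g b} = {Inl b, Inr w}" using True unfolding g_def by (simp add: insert_commute)
        show ?thesis unfolding e using sub_e3[of b w G1 u G2] True b w \<open>b \<noteq> u\<close> by simp
      next
        case False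
        show ?thesis
        proof (cases "b = u")
          case True
          then have e: "{g a, g b} = {Inl a, Inr w}" using False unfolding g_def by simp
          show ?thesis unfolding e using sub_e3[of a w G1 u G2] True a w False by (simp add: insert_commute)
        next
          case False
          then have e: "{g a, g b} = {Inl a, Inl b}" using \<open>a \<noteq> u\<close> unfolding g_def by simp
          show ?thesis unfolding e using sub_e2[of a b G1 u G2] False \<open>a \<noteq> u\<close> by simp
        qed
      qed
    qed
    have "chainP (twin_width ?S) G1 (singl (fst G1))"
      by (rule embed_lb[OF gS assms(3) inj img edge ts(1)])
    then show ?thesis by (rule t1(2))
  qed
  have lo2: "twin_width G2 \<le> twin_width ?S"
  proof -
    have inj: "inj_on (Inr :: 'b \<Rightarrow> 'a + 'b) (fst G2)" by simp
    have img: "(Inr :: 'b \<Rightarrow> 'a + 'b) ` fst G2 \<subseteq> fst ?S" unfolding sub_vs by auto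
    have edge: "\<And>a b. a \<in> fst G2 \<Longrightarrow> b \<in> fst G2 \<Longrightarrow> a \<noteq> b \<Longrightarrow> ({a,b} \<in> snd G2 \<longleftrightarrow> {Inr a, Inr b} \<in> snd ?S)"
      using sub_e1 by metis
    have "chainP (twin_width ?S) G2 (singl (fst G2))"
      by (rule embed_lb[OF gS assms(4) inj img edge ts(1)])
    then show ?thesis by (rule t2(2))
  qed
  show ?thesis using up lo1 lo2 by simp
qed

end
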